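(* Let $T_1=(V_1,E_1)$ and $T_2=(V_2,E_2)$ be trees with $|V_1|=|V_2|=n$. Then $S_{T_1}\cap S_{T_2}\ne\emptyset$ if and only if $T_1$ and $T_2$ are isomorphic.
   Context: $\mathbb{C}[S_n]$ is the group algebra of the symmetric group $S_n$. A labeling of a graph $G=(V,E)$ with $|V|=n$ is a bijection $\mathcal{L}:V\to\{1,\dots,n\}$; under it an edge $\{u,v\}$ corresponds to the transposition $(\mathcal{L}(u)\,\mathcal{L}(v))\in S_n$. For a labeling $\mathcal{L}$ and an ordering $\pi=(e_1,\dots,e_m)$ of $E$, $\mathcal{K}_{\mathcal{L},\pi}(G)=n!\,(1-t_1)(1-t_2)\cdots(1-t_m)\in\mathbb{C}[S_n]$, where $t_r$ is the transposition corresponding to $e_r$ under $\mathcal{L}$ and the product is in the order of $\pi$. Define $S_G=\{\mathcal{K}_{\mathcal{L},\pi}(G):\mathcal{L}\text{ a labeling of }V,\ \pi\text{ an ordering of }E\}$. *)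

theory Defs
  imports "HOL-Combinatorics.Permutations" Complex_Main
begin

text \<open>An element of C[S_n] is a function from permutations to complex numbers, zero outside S_n.
  Group product of permutations is composition (sigma o tau).\<close>

definition Sym :: "nat \<Rightarrow> (nat \<Rightarrow> nat) set" where
  "Sym n = {p. p permutes {1..n}}"

type_synonym galg = "(nat \<Rightarrow> nat) \<Rightarrow> complex"

definition ga_basis :: "(nat \<Rightarrow> nat) \<Rightarrow> galg" where
  "ga_basis p = (\<lambda>\<sigma>. if \<sigma> = p then 1 else 0)"

definition ga_one :: galg where
  "ga_one = ga_basis id"

definition ga_mult :: "nat \<Rightarrow> galg \<Rightarrow> galg \<Rightarrow> galg" where
  "ga_mult n f g = (\<lambda>\<sigma>. \<Sum>\<tau>\<in>Sym n. f \<tau> * g (inv \<tau> \<circ> \<sigma>))"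

definition ga_scale :: "complex \<Rightarrow> galg \<Rightarrow> galg" where
  "ga_scale c f = (\<lambda>\<sigma>. c * f \<sigma>)"

definition ga_diff :: "galg \<Rightarrow> galg \<Rightarrow> galg" where
  "ga_diff f g = (\<lambda>\<sigma>. f \<sigma> - g \<sigma>)"

definition ga_prod :: "nat \<Rightarrow> galg list \<Rightarrow> galg" where
  "ga_prod n xs = foldr (ga_mult n) xs ga_one"

definition simple_graph :: "'a set \<Rightarrow> 'a set set \<Rightarrow> bool" where
  "simple_graph V E \<longleftrightarrow> finite V \<and> (\<forall>e\<in>E. \<exists>u v. u \<in> V \<and> v \<in> V \<and> u \<noteq> v \<and> e = {u, v})"

definition adj :: "'a set set \<Rightarrow> 'a \<Rightarrow> 'a \<Rightarrow> bool" where
  "adj E u v \<longleftrightarrow> {u, v} \<in> E"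

definition walk :: "'a set \<Rightarrow> 'a set set \<Rightarrow> 'a list \<Rightarrow> bool" where
  "walk V E ws \<longleftrightarrow> ws \<noteq> [] \<and> set ws \<subseteq> V \<and> (\<forall>i. Suc i < length ws \<longrightarrow> adj E (ws ! i) (ws ! Suc i))"

definition connected_graph :: "'a set \<Rightarrow> 'a set set \<Rightarrow> bool" where
  "connected_graph V E \<longleftrightarrow>
     (\<forall>u\<in>V. \<forall>v\<in>V. \<exists>ws. walk V E ws \<and> hd ws = u \<and> last ws = v)"

definition has_cycle :: "'a set \<Rightarrow> 'a set set \<Rightarrow> bool" where
  "has_cycle V E \<longleftrightarrow>
     (\<exists>cs. length cs \<ge> 3 \<and> distinct cs \<and> walk V E cs \<and> adj E (last cs) (hd cs))"

definition is_tree :: "'a set \<Rightarrow> 'a set set \<Rightarrow> bool" where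
  "is_tree V E \<longleftrightarrow> simple_graph V E \<and> V \<noteq> {} \<and> connected_graph V E \<and> \<not> has_cycle V E"

definition graph_iso :: "'a set \<Rightarrow> 'a set set \<Rightarrow> 'b set \<Rightarrow> 'b set set \<Rightarrow> bool" where
  "graph_iso V1 E1 V2 E2 \<longleftrightarrow>
     (\<exists>f. bij_betw f V1 V2 \<and> (\<forall>u\<in>V1. \<forall>v\<in>V1. {u, v} \<in> E1 \<longleftrightarrow> {f u, f v} \<in> E2))"

text \<open>Transposition corresponding to the edge e = {u,v} under labeling L
  (well defined since transpose is symmetric).\<close>
definition edge_transp :: "('a \<Rightarrow> nat) \<Rightarrow> 'a set \<Rightarrow> (nat \<Rightarrow> nat)" where
  "edge_transp L e = (SOME t. \<exists>u v. e = {u, v} \<and> u \<noteq> v \<and> t = transpose (L u) (L v))"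

definition K_elem :: "nat \<Rightarrow> ('a \<Rightarrow> nat) \<Rightarrow> 'a set list \<Rightarrow> galg" where
  "K_elem n L es = ga_scale (of_nat (fact n))
      (ga_prod n (map (\<lambda>e. ga_diff ga_one (ga_basis (edge_transp L e))) es))"

definition S_graph :: "'a set \<Rightarrow> 'a set set \<Rightarrow> galg set" where
  "S_graph V E = {K_elem (card V) L es | L es.
      bij_betw L V {1..card V} \<and> distinct es \<and> set es = E}"

end

theory Submission imports Defs begin

definition ga_elt :: "(nat \<Rightarrow> nat) \<Rightarrow> galg" where
  "ga_elt t = ga_diff ga_one (ga_basis t)"

lemma mult_step:
  assumes "a \<in> {1..n}" "b \<in> {1..n}" "a \<noteq> b"
  shows "ga_mult n (ga_elt (transpose a b)) Q \<sigma> = Q \<sigma> - Q (transpose a b \<circ> \<sigma>)"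
proof -
  have i: "id \<in> Sym n" and t: "transpose a b \<in> Sym n"
    using assms by (auto simp: Sym_def permutes_id permutes_swap_id)
  have fin: "finite (Sym n)" unfolding Sym_def
    using finite_permutations[of "{1..n}"] by simp
  have ne: "transpose a b \<noteq> id" using assms
    by (metis id_apply transpose_apply_first)
  have "ga_mult n (ga_elt (transpose a b)) Q \<sigma> =
     (\<Sum>\<tau>\<in>Sym n. (if \<tau> = id then Q (inv \<tau> \<circ> \<sigma>) else 0) - (if \<tau> = transpose a b then Q (inv \<tau> \<circ> \<sigma>) else 0))"
    unfolding ga_mult_def ga_elt_def ga_diff_def ga_one_def ga_basis_def
    by (rule sum.cong) (auto simp: left_diff_distrib)
  also have "\<dots> = (\<Sum>\<tau>\<in>Sym n. (if \<tau> = id then Q (inv \<tau> \<circ> \<sigma>) else 0)) -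
     (\<Sum>\<tau>\<in>Sym n. (if \<tau> = transpose a b then Q (inv \<tau> \<circ> \<sigma>) else 0))"
    by (rule sum_subtractf)
  also have "\<dots> = Q \<sigma> - Q (transpose a b \<circ> \<sigma>)"
    using i t fin by (simp only: sum.delta if_True inv_id inv_transpose_eq id_comp)
  finally show ?thesis .
qed

definition Qp :: "nat \<Rightarrow> (nat \<times> nat) list \<Rightarrow> galg" where
  "Qp n ps = ga_prod n (map (\<lambda>(a,b). ga_elt (transpose a b)) ps)"

definition Rp :: "(nat \<times> nat) list \<Rightarrow> (nat \<times> nat) set" where
  "Rp ps = {(x,y). \<exists>(c,d)\<in>set ps. {x,y} = {c,d}}"

fun forest :: "(nat \<times> nat) list \<Rightarrow> bool" where
  "forest [] = True"
| "forest ((a,b)#ps) = ((a,b) \<notin> (Rp ps)\<^sup>* \<and> forest ps)"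

definition okp :: "nat \<Rightarrow> (nat \<times> nat) list \<Rightarrow> bool" where
  "okp n ps = (\<forall>(a,b)\<in>set ps. a \<in> {1..n} \<and> b \<in> {1..n} \<and> a \<noteq> b)"

lemma Qp_Cons:
  assumes "okp n ((a,b)#ps)"
  shows "Qp n ((a,b)#ps) \<sigma> = Qp n ps \<sigma> - Qp n ps (transpose a b \<circ> \<sigma>)"
  using assms mult_step[of a n b] by (simp add: Qp_def ga_prod_def okp_def)

lemma Qp_Nil: "Qp n [] \<sigma> = (if \<sigma> = id then 1 else 0)"
  by (simp add: Qp_def ga_prod_def ga_one_def ga_basis_def)

lemma Rp_mono: "Rp ps \<subseteq> Rp (p#ps)"
  by (auto simp: Rp_def)

lemma Rp_sym: "(x,y) \<in> Rp ps \<Longrightarrow> (y,x) \<in> Rp ps"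
  by (auto simp: Rp_def insert_commute)

lemma Rp_sym_rt: "(x,y) \<in> (Rp ps)\<^sup>* \<Longrightarrow> (y,x) \<in> (Rp ps)\<^sup>*"
proof (induction rule: rtrancl_induct)
  case base
  then show ?case by simp
next
  case (step y z)
  show ?case by (rule converse_rtrancl_into_rtrancl[OF Rp_sym[OF step(2)] step(3)])
qed

lemma lemC:
  assumes "okp n ps" "Qp n ps \<sigma> \<noteq> 0"
  shows "(x, \<sigma> x) \<in> (Rp ps)\<^sup>*"
  using assms
proof (induction ps arbitrary: \<sigma> x)
  case Nil
  then show ?case by (simp add: Qp_Nil split: if_splits)
next
  case (Cons p ps)
  obtain a b where p: "p = (a,b)" by fastforce
  have ok: "okp n ps" using Cons.prems by (simp add: okp_def)
  have mono: "(Rp ps)\<^sup>* \<subseteq> (Rp (p#ps))\<^sup>*" by (simp add: Rp_mono rtrancl_mono)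
  from Cons.prems p Qp_Cons[of n a b ps \<sigma>]
  have "Qp n ps \<sigma> \<noteq> 0 \<or> Qp n ps (transpose a b \<circ> \<sigma>) \<noteq> 0" by auto
  then show ?case
  proof
    assume "Qp n ps \<sigma> \<noteq> 0"
    then show ?thesis using Cons.IH ok mono by blast
  next
    assume "Qp n ps (transpose a b \<circ> \<sigma>) \<noteq> 0"
    then have 1: "(x, transpose a b (\<sigma> x)) \<in> (Rp (p#ps))\<^sup>*" using Cons.IH[OF ok] mono by force
    have "(transpose a b (\<sigma> x), \<sigma> x) \<in> (Rp (p#ps))\<^sup>="
      by (auto simp: p Rp_def transpose_def insert_commute)
    then show ?thesis using 1
      by (metis UnE pair_in_Id_conv rtrancl.rtrancl_into_rtrancl)
  qed
qed

lemma tr_case: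
  assumes "x \<noteq> y" "a \<noteq> b" "{x,y} \<noteq> {a,b}"
  shows "(transpose a b \<circ> transpose x y) a = b \<or> (transpose a b \<circ> transpose x y) b = a"
  using assms by (auto simp: transpose_def)

lemma tr_id: "{x,y} = {a,b} \<Longrightarrow> transpose a b \<circ> transpose x y = id"
  by (auto simp: doubleton_eq_iff transpose_commute)

lemma lemAB:
  assumes "okp n ps" "forest ps"
  shows "Qp n ps id = 1 \<and> (\<forall>x y. x \<noteq> y \<longrightarrow>
     Qp n ps (transpose x y) = (if \<exists>(c,d)\<in>set ps. {x,y} = {c,d} then -1 else 0))"
  using assms
proof (induction ps)
  case Nil
  then show ?case by (auto simp: Qp_Nil) (metis id_apply transpose_apply_first)
next
  case (Cons p ps)
  obtain a b where p: "p = (a,b)" by fastforce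
  have ok: "okp n ps" using Cons.prems by (simp add: okp_def)
  have ab: "a \<noteq> b" using Cons.prems p by (simp add: okp_def)
  have nf: "(a,b) \<notin> (Rp ps)\<^sup>*" "forest ps" using Cons.prems p by auto
  note IH = Cons.IH[OF ok nf(2)]
  have z: "Qp n ps \<tau> = 0" if "\<tau> a = b \<or> \<tau> b = a" for \<tau>
  proof (rule ccontr)
    assume "Qp n ps \<tau> \<noteq> 0"
    then have "(a, \<tau> a) \<in> (Rp ps)\<^sup>*" "(b, \<tau> b) \<in> (Rp ps)\<^sup>*" using lemC[OF ok] by auto
    then show False using that nf(1) Rp_sym_rt[of b a ps] by auto
  qed
  have "Qp n ((a,b)#ps) id = 1"
    using Qp_Cons[of n a b ps id] Cons.prems p IH z[of "transpose a b"] by simp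
  moreover have "Qp n ((a,b)#ps) (transpose x y) = (if \<exists>(c,d)\<in>set ((a,b)#ps). {x,y} = {c,d} then -1 else 0)"
    if xy: "x \<noteq> y" for x y
  proof (cases "{x,y} = {a,b}")
    case True
    then have "(if \<exists>(c,d)\<in>set ps. {x,y} = {c,d} then -1 else 0) = Qp n ps (transpose x y)"
      using IH xy by simp
    moreover have "Qp n ps (transpose x y) = 0"
      using z True by (auto simp: doubleton_eq_iff transpose_commute)
    ultimately show ?thesis
      using Qp_Cons[of n a b ps "transpose x y"] Cons.prems p IH tr_id[OF True] True by auto
  next
    case False
    have "Qp n ps (transpose a b \<circ> transpose x y) = 0"
      using z tr_case[OF xy ab False] by blast
    then show ?thesis
      using Qp_Cons[of n a b ps "transpose x y"] Cons.prems p IH xy False by auto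
  qed
  ultimately show ?case by (simp only: p) blast
qed


definition Rel :: "'a set set \<Rightarrow> ('a \<times> 'a) set" where
  "Rel F = {(x,y). {x,y} \<in> F}"

definition pathF :: "'a set set \<Rightarrow> 'a list \<Rightarrow> bool" where
  "pathF F ws \<longleftrightarrow> ws \<noteq> [] \<and> distinct ws \<and> (\<forall>i. Suc i < length ws \<longrightarrow> {ws!i, ws!Suc i} \<in> F)"

lemma path_ex:
  assumes "(u,w) \<in> (Rel F)\<^sup>*"
  shows "\<exists>ws. pathF F ws \<and> hd ws = u \<and> last ws = w"
  using assms
proof (induction rule: rtrancl_induct)
  case base
  then show ?case by (rule exI[of _ "[u]"]) (simp add: pathF_def)
next
  case (step w z)
  then obtain ws where ws: "pathF F ws" "hd ws = u" "last ws = w" by blast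
  have wz: "{w,z} \<in> F" using step(2) by (simp add: Rel_def)
  show ?case
  proof (cases "z \<in> set ws")
    case True
    then obtain k where k: "k < length ws" "ws ! k = z" by (meson in_set_conv_nth)
    let ?ws = "take (Suc k) ws"
    have "pathF F ?ws" using ws(1) k unfolding pathF_def by auto
    moreover have "hd ?ws = u" using ws k by (simp add: pathF_def hd_take) 
    moreover have "last ?ws = z" using k by (simp add: take_Suc_conv_app_nth)
    ultimately show ?thesis by blast
  next
    case False
    let ?ws = "ws @ [z]"
    have "pathF F ?ws"
      unfolding pathF_def
    proof (intro conjI allI impI)
      show "distinct ?ws" using False ws(1) by (simp add: pathF_def)
      fix i assume i: "Suc i < length ?ws"
      show "{?ws!i, ?ws!Suc i} \<in> F"
      proof (cases "Suc i < length ws")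
        case True
        then show ?thesis using ws(1) by (simp add: pathF_def nth_append)
      next
        case False
        then have "i = length ws - 1" "Suc i = length ws" using i by auto
        then show ?thesis using ws wz by (simp add: nth_append pathF_def last_conv_nth)
      qed
    qed simp
    moreover have "hd ?ws = u" "last ?ws = z" using ws by (auto simp: pathF_def)
    ultimately show ?thesis by blast
  qed
qed

lemma sg_edge: "simple_graph V E \<Longrightarrow> {x,y} \<in> E \<Longrightarrow> x \<in> V \<and> y \<in> V"
  unfolding simple_graph_def by (metis doubleton_eq_iff)

lemma cycle_of:
  assumes sg: "simple_graph V E" and e: "{u,v} \<in> E" and uv: "u \<noteq> v"
    and r: "(u,v) \<in> (Rel (E - {{u,v}}))\<^sup>*"
  shows "has_cycle V E"
proof -
  obtain ws where ws: "pathF (E - {{u,v}}) ws" "hd ws = u" "last ws = v"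
    using path_ex[OF r] by blast
  have ne: "ws \<noteq> []" using ws by (simp add: pathF_def)
  have l2: "length ws \<ge> 2"
  proof (rule ccontr)
    assume "\<not> ?thesis"
    then have "length ws = 1" using ne by (simp add: not_le less_2_cases_iff)
    then obtain x where "ws = [x]" by (metis length_0_conv length_Suc_conv One_nat_def)
    then show False using ws uv by auto
  qed
  have l3: "length ws \<ge> 3"
  proof (rule ccontr)
    assume "\<not> ?thesis"
    then have "length ws = 2" using l2 by auto
    then obtain x y where "ws = [x,y]"
      by (metis One_nat_def Suc_1 length_0_conv length_Suc_conv)
    then show False using ws by (auto simp: pathF_def)
  qed
  have adjs: "\<And>i. Suc i < length ws \<Longrightarrow> {ws!i, ws!Suc i} \<in> E"
    using ws(1) by (auto simp: pathF_def)
  have "set ws \<subseteq> V"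
  proof
    fix x assume "x \<in> set ws"
    then obtain i where i: "i < length ws" "ws!i = x" by (meson in_set_conv_nth)
    show "x \<in> V"
    proof (cases i)
      case 0
      then show ?thesis using i ws(2) ne sg_edge[OF sg e] by (simp add: hd_conv_nth)
    next
      case (Suc j)
      then show ?thesis using i adjs[of j] sg_edge[OF sg] by auto
    qed
  qed
  then have "walk V E ws" using adjs ne by (simp add: walk_def adj_def)
  moreover have "adj E (last ws) (hd ws)" using ws e by (simp add: adj_def insert_commute)
  ultimately show ?thesis using l3 ws(1) unfolding has_cycle_def pathF_def by blast
qed


definition pk :: "'a set \<Rightarrow> 'a \<times> 'a" where
  "pk e = (SOME p. e = {fst p, snd p} \<and> fst p \<noteq> snd p)"

lemma pk_spec:
  assumes "simple_graph V E" "e \<in> E"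
  shows "e = {fst (pk e), snd (pk e)} \<and> fst (pk e) \<noteq> snd (pk e) \<and> fst (pk e) \<in> V \<and> snd (pk e) \<in> V"
proof -
  obtain u v where "u \<in> V" "v \<in> V" "u \<noteq> v" "e = {u,v}" using assms unfolding simple_graph_def by blast
  then have "\<exists>p. e = {fst p, snd p} \<and> fst p \<noteq> snd p" by (intro exI[of _ "(u,v)"]) auto
  then have h: "e = {fst (pk e), snd (pk e)} \<and> fst (pk e) \<noteq> snd (pk e)"
    unfolding pk_def by (rule someI_ex)
  have "{fst (pk e), snd (pk e)} \<in> E"
    by (rule ssubst[of "{fst (pk e), snd (pk e)}" e "\<lambda>x. x \<in> E", OF sym[OF conjunct1[OF h]] assms(2)])
  then have "fst (pk e) \<in> V \<and> snd (pk e) \<in> V" using sg_edge[OF assms(1)] by blast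
  then show ?thesis using h by blast
qed

lemma edge_transp_eq:
  assumes "e = {u,v}" "u \<noteq> v"
  shows "edge_transp L e = transpose (L u) (L v)"
proof -
  have ex: "\<exists>t. \<exists>u' v'. e = {u', v'} \<and> u' \<noteq> v' \<and> t = transpose (L u') (L v')"
    using assms by blast
  have "\<exists>u' v'. e = {u', v'} \<and> u' \<noteq> v' \<and> edge_transp L e = transpose (L u') (L v')"
    unfolding edge_transp_def by (rule someI_ex[OF ex])
  then obtain u' v' where h: "{u,v} = {u', v'}" "edge_transp L e = transpose (L u') (L v')"
    using assms(1) by blast
  from h(1) have "(u = u' \<and> v = v') \<or> (u = v' \<and> v = u')" by (simp add: doubleton_eq_iff)
  then show ?thesis using h(2) by (auto simp: transpose_commute)
qed

lemma pk_spec2: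
  assumes "simple_graph V E" "e \<in> E"
  shows "{fst (pk e), snd (pk e)} = e" "fst (pk e) \<noteq> snd (pk e)" "fst (pk e) \<in> V" "snd (pk e) \<in> V"
proof -
  note h = pk_spec[OF assms]
  show "{fst (pk e), snd (pk e)} = e" by (rule sym[OF conjunct1[OF h]])
  show "fst (pk e) \<noteq> snd (pk e)" by (rule conjunct1[OF conjunct2[OF h]])
  show "fst (pk e) \<in> V" by (rule conjunct1[OF conjunct2[OF conjunct2[OF h]]])
  show "snd (pk e) \<in> V" by (rule conjunct2[OF conjunct2[OF conjunct2[OF h]]])
qed

definition psof :: "('a \<Rightarrow> nat) \<Rightarrow> 'a set list \<Rightarrow> (nat \<times> nat) list" where
  "psof L es = map (\<lambda>e. (L (fst (pk e)), L (snd (pk e)))) es"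

lemma K_eq:
  assumes sg: "simple_graph V E" and es: "set es \<subseteq> E"
  shows "K_elem n L es = ga_scale (of_nat (fact n)) (Qp n (psof L es))"
proof -
  have "map (\<lambda>e. ga_diff ga_one (ga_basis (edge_transp L e))) es =
        map (\<lambda>(a,b). ga_elt (transpose a b)) (psof L es)"
    unfolding psof_def map_map
  proof (rule map_cong[OF refl])
    fix e assume "e \<in> set es"
    then have "e \<in> E" using es by blast
    note s = pk_spec2[OF sg this]
    show "ga_diff ga_one (ga_basis (edge_transp L e)) =
       ((\<lambda>(a,b). ga_elt (transpose a b)) \<circ> (\<lambda>e. (L (fst (pk e)), L (snd (pk e))))) e"
      using edge_transp_eq[OF sym[OF s(1)] s(2), of L] by (simp add: ga_elt_def)
  qed
  then show ?thesis by (simp add: K_elem_def Qp_def)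
qed

lemma okp_psof:
  assumes sg: "simple_graph V E" and es: "set es \<subseteq> E" and L: "bij_betw L V {1..n}"
  shows "okp n (psof L es)"
  unfolding okp_def psof_def
proof (clarsimp)
  fix e assume "e \<in> set es"
  then have "e \<in> E" using es by blast
  from pk_spec2[OF sg this] L show "Suc 0 \<le> L (fst (pk e)) \<and> L (fst (pk e)) \<le> n \<and>
       Suc 0 \<le> L (snd (pk e)) \<and> L (snd (pk e)) \<le> n \<and> L (fst (pk e)) \<noteq> L (snd (pk e))"
    unfolding bij_betw_def inj_on_def by auto
qed

lemma RelI: "{a,b} \<in> F \<Longrightarrow> (a,b) \<in> Rel F" by (simp add: Rel_def)

lemma transfer:
  assumes sg: "simple_graph V E" and es: "set es \<subseteq> E" and inj: "inj_on L V"
    and r: "(p,q) \<in> (Rp (psof L es))\<^sup>*"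
    and x: "p = L x" "x \<in> V"
  shows "\<exists>y\<in>V. q = L y \<and> (x,y) \<in> (Rel (set es))\<^sup>*"
  using r
proof (induction rule: rtrancl_induct)
  case base
  then show ?case using x by blast
next
  case (step q r)
  then obtain y where y: "y \<in> V" "q = L y" "(x,y) \<in> (Rel (set es))\<^sup>*" by blast
  from step(2) obtain e where e: "e \<in> set es" "{q,r} = {L (fst (pk e)), L (snd (pk e))}"
    unfolding Rp_def psof_def by auto
  have eE: "e \<in> E" using e es by blast
  note s = pk_spec2[OF sg eE]
  show ?case
  proof (cases "q = L (fst (pk e))")
    case True
    then have "y = fst (pk e)" using y s inj by (simp add: inj_on_def)
    moreover have "r = L (snd (pk e))" using e True s inj by (auto simp: doubleton_eq_iff inj_on_def)
    moreover have "(fst (pk e), snd (pk e)) \<in> Rel (set es)" using s e by (metis RelI)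
    ultimately have "(x, snd (pk e)) \<in> (Rel (set es))\<^sup>*" using y by (simp add: rtrancl_into_rtrancl)
    then show ?thesis using s \<open>r = L (snd (pk e))\<close> by blast
  next
    case False
    then have q: "q = L (snd (pk e))" "r = L (fst (pk e))" using e by (auto simp: doubleton_eq_iff)
    then have "y = snd (pk e)" using y s inj by (simp add: inj_on_def)
    moreover have "(snd (pk e), fst (pk e)) \<in> Rel (set es)" using s e by (metis RelI insert_commute)
    ultimately have "(x, fst (pk e)) \<in> (Rel (set es))\<^sup>*" using y by (simp add: rtrancl_into_rtrancl)
    then show ?thesis using s q by blast
  qed
qed

lemma forest_psof:
  assumes sg: "simple_graph V E" and nc: "\<not> has_cycle V E" and inj: "inj_on L V"
  shows "distinct es \<Longrightarrow> set es \<subseteq> E \<Longrightarrow> forest (psof L es)"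
proof (induction es)
  case Nil
  then show ?case by (simp add: psof_def)
next
  case (Cons e es)
  have eE: "e \<in> E" using Cons.prems by simp
  note s = pk_spec2[OF sg eE]
  define u where "u = fst (pk e)"
  define v where "v = snd (pk e)"
  have uv: "e = {u,v}" "u \<noteq> v" "u \<in> V" "v \<in> V" using s by (auto simp: u_def v_def)
  have ps: "psof L (e#es) = (L u, L v) # psof L es" by (simp add: psof_def u_def v_def)
  have "(L u, L v) \<notin> (Rp (psof L es))\<^sup>*"
  proof
    assume a: "(L u, L v) \<in> (Rp (psof L es))\<^sup>*"
    have ss: "set es \<subseteq> E" using Cons.prems by simp
    obtain y where y: "y \<in> V" "L v = L y" "(u,y) \<in> (Rel (set es))\<^sup>*"
      using transfer[OF sg ss inj a refl uv(3)] by blast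
    then have "y = v" using inj uv by (simp add: inj_on_def)
    moreover have "Rel (set es) \<subseteq> Rel (E - {{u,v}})"
      using Cons.prems uv by (auto simp: Rel_def)
    ultimately have "(u,v) \<in> (Rel (E - {{u,v}}))\<^sup>*" using y rtrancl_mono by blast
    then show False using cycle_of[OF sg _ uv(2)] eE uv nc by blast
  qed
  then show ?case using Cons by (simp add: ps)
qed

lemma edge_iff:
  assumes sg: "simple_graph V E" and es: "set es = E" and inj: "inj_on L V"
    and u: "u \<in> V" "v \<in> V"
  shows "{u,v} \<in> E \<longleftrightarrow> (\<exists>(c,d)\<in>set (psof L es). {L u, L v} = {c,d})"
proof
  assume "{u,v} \<in> E"
  then show "\<exists>(c,d)\<in>set (psof L es). {L u, L v} = {c,d}"
  proof -
    assume uvE: "{u,v} \<in> E"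
    note s = pk_spec2[OF sg uvE]
    have "{L u, L v} = {L (fst (pk {u,v})), L (snd (pk {u,v}))}"
      using s(1) by (auto simp: doubleton_eq_iff)
    moreover have "(L (fst (pk {u,v})), L (snd (pk {u,v}))) \<in> set (psof L es)"
      using uvE es unfolding psof_def by auto
    ultimately show ?thesis by blast
  qed
next
  assume "\<exists>(c,d)\<in>set (psof L es). {L u, L v} = {c,d}"
  then obtain e where e: "e \<in> E" "{L u, L v} = {L (fst (pk e)), L (snd (pk e))}"
    using es unfolding psof_def by auto
  note s = pk_spec2[OF sg e(1)]
  have "{u,v} = {fst (pk e), snd (pk e)}"
  proof -
    have m: "fst (pk e) \<in> V" "snd (pk e) \<in> V" using s(3,4) by auto
    show ?thesis using e(2) m u by (auto simp: doubleton_eq_iff inj_on_eq_iff[OF inj])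
  qed
  then show "{u,v} \<in> E" using s(1) e(1) by simp
qed


lemma edge_char:
  assumes sg: "simple_graph V E" and nc: "\<not> has_cycle V E" and es: "distinct es" "set es = E"
    and L: "bij_betw L V {1..n}" and u: "u \<in> V" "v \<in> V"
  shows "{u,v} \<in> E \<longleftrightarrow> (L u \<noteq> L v \<and> Qp n (psof L es) (transpose (L u) (L v)) \<noteq> 0)"
proof (cases "u = v")
  case True
  have "{u} \<notin> E"
  proof
    assume "{u} \<in> E"
    note s = pk_spec2[OF sg this]
    have "fst (pk {u}) = u" "snd (pk {u}) = u" using s(1) by blast+
    then show False using s(2) by simp
  qed
  then show ?thesis using True by simp
next
  case False
  have inj: "inj_on L V" using L by (simp add: bij_betw_def)
  then have ne: "L u \<noteq> L v" using False u by (meson inj_on_eq_iff)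
  have ok: "okp n (psof L es)" using okp_psof[OF sg _ L] es by simp
  have fo: "forest (psof L es)" using forest_psof[OF sg nc inj] es by simp
  from lemAB[OF ok fo] ne have
    "Qp n (psof L es) (transpose (L u) (L v)) = (if \<exists>(c,d)\<in>set (psof L es). {L u, L v} = {c,d} then -1 else 0)"
    by blast
  then show ?thesis using edge_iff[OF sg es(2) inj u] ne by simp
qed

lemma scale_cancel:
  assumes "ga_scale (of_nat (fact n)) f = ga_scale (of_nat (fact n)) g"
  shows "f = g"
proof
  fix x
  have "of_nat (fact n) * f x = of_nat (fact n) * g x"
    using fun_cong[OF assms, of x] by (simp add: ga_scale_def)
  moreover have "(of_nat (fact n) :: complex) \<noteq> 0" by simp
  ultimately show "f x = g x" by simp
qed

lemma sg_obtain: "simple_graph V E \<Longrightarrow> e \<in> E \<Longrightarrow> \<exists>a b. a \<in> V \<and> b \<in> V \<and> a \<noteq> b \<and> e = {a,b}"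
  unfolding simple_graph_def by blast

lemma tree_sg: "is_tree V E \<Longrightarrow> simple_graph V E \<and> \<not> has_cycle V E"
  by (simp add: is_tree_def)

theorem mainTheorem8:
  fixes V1 :: "'a set" and E1 :: "'a set set" and V2 :: "'b set" and E2 :: "'b set set"
    and n :: nat
  assumes "is_tree V1 E1" and "is_tree V2 E2"
    and "card V1 = n" and "card V2 = n"
  shows "S_graph V1 E1 \<inter> S_graph V2 E2 \<noteq> {} \<longleftrightarrow> graph_iso V1 E1 V2 E2"
proof
  note t1 = tree_sg[OF assms(1)] and t2 = tree_sg[OF assms(2)]
  assume "S_graph V1 E1 \<inter> S_graph V2 E2 \<noteq> {}"
  then obtain K where K1: "K \<in> S_graph V1 E1" and K2: "K \<in> S_graph V2 E2" by blast
  from K1 obtain L1 es1 where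
    h1: "bij_betw L1 V1 {1..n}" "distinct es1" "set es1 = E1" and k1: "K = K_elem n L1 es1"
    unfolding S_graph_def assms(3) by blast
  from K2 obtain L2 es2 where
    h2: "bij_betw L2 V2 {1..n}" "distinct es2" "set es2 = E2" and k2: "K = K_elem n L2 es2"
    unfolding S_graph_def assms(4) by blast
  have "ga_scale (of_nat (fact n)) (Qp n (psof L1 es1)) = ga_scale (of_nat (fact n)) (Qp n (psof L2 es2))"
    using k1 k2 K_eq[OF t1[THEN conjunct1], of es1 n L1] K_eq[OF t2[THEN conjunct1], of es2 n L2] h1(3) h2(3)
    by simp
  then have Qeq: "Qp n (psof L1 es1) = Qp n (psof L2 es2)" by (rule scale_cancel)
  define f where "f = inv_into V2 L2 \<circ> L1"
  have bf: "bij_betw f V1 V2" unfolding f_def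
    using h1(1) bij_betw_inv_into[OF h2(1)] by (rule bij_betw_trans)
  have Lf: "L2 (f u) = L1 u" if "u \<in> V1" for u
  proof -
    have "L1 u \<in> L2 ` V2" using h1(1) h2(1) that by (auto simp: bij_betw_def)
    then show ?thesis by (simp add: f_def f_inv_into_f)
  qed
  have fV: "f u \<in> V2" if "u \<in> V1" for u using bf that by (auto simp: bij_betw_def)
  have "{u,v} \<in> E1 \<longleftrightarrow> {f u, f v} \<in> E2" if "u \<in> V1" "v \<in> V1" for u v
    using edge_char[OF t1[THEN conjunct1] t1[THEN conjunct2] h1(2,3) h1(1) that]
      edge_char[OF t2[THEN conjunct1] t2[THEN conjunct2] h2(2,3) h2(1) fV[OF that(1)] fV[OF that(2)]]
      Lf that Qeq by simp
  then show "graph_iso V1 E1 V2 E2" unfolding graph_iso_def using bf by blast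
next
  note t1 = tree_sg[OF assms(1)] and t2 = tree_sg[OF assms(2)]
  have sg1: "simple_graph V1 E1" using t1 by simp
  assume "graph_iso V1 E1 V2 E2"
  then obtain f where bf: "bij_betw f V1 V2" and fe: "\<forall>u\<in>V1. \<forall>v\<in>V1. {u, v} \<in> E1 \<longleftrightarrow> {f u, f v} \<in> E2"
    unfolding graph_iso_def by blast
  have fin: "finite V1" using sg1 by (simp add: simple_graph_def)
  obtain h where "bij_betw h {1..card V1} V1" using ex_bij_betw_nat_finite_1[OF fin] by blast
  then have L1: "bij_betw (inv_into {1..n} h) V1 {1..n}" using assms(3) by (simp add: bij_betw_inv_into)
  define L1' where "L1' = inv_into {1..n} h"
  have E1sub: "E1 \<subseteq> Pow V1"
  proof
    fix e assume "e \<in> E1"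
    from sg_obtain[OF sg1 this] obtain a b where "a \<in> V1" "b \<in> V1" "e = {a,b}" by blast
    then show "e \<in> Pow V1" by simp
  qed
  then have "finite E1" using fin finite_subset by blast
  then obtain es1 where es1: "set es1 = E1" "distinct es1" using finite_distinct_list by blast
  define L2 where "L2 = L1' \<circ> inv_into V1 f"
  define es2 where "es2 = map ((`) f) es1"
  have inj: "inj_on f V1" using bf by (simp add: bij_betw_def)
  have L2b: "bij_betw L2 V2 {1..n}" unfolding L2_def L1'_def
    using bij_betw_inv_into[OF bf] L1 by (rule bij_betw_trans)
  have dis2: "distinct es2" unfolding es2_def distinct_map
  proof
    show "inj_on ((`) f) (set es1)"
    proof (rule inj_onI)
      fix x y assume "x \<in> set es1" "y \<in> set es1" "f ` x = f ` y"
      moreover have "x \<subseteq> V1" "y \<subseteq> V1" using E1sub es1 calculation(1,2) by auto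
      ultimately show "x = y" using inj_on_image_eq_iff[OF inj] by blast
    qed
  qed (simp add: es1)
  have set2: "set es2 = E2"
  proof
    show "set es2 \<subseteq> E2"
    proof
      fix e2 assume "e2 \<in> set es2"
      then obtain e where e: "e \<in> E1" "e2 = f ` e" using es1 es2_def by auto
      from sg_obtain[OF sg1 e(1)] obtain a b where ab: "e = {a,b}" "a \<in> V1" "b \<in> V1" by blast
      then have e2ab: "e2 = {f a, f b}" using e by simp
      have "{a,b} \<in> E1" using ab e by simp
      then have "{f a, f b} \<in> E2" using fe ab(2,3) by blast
      then show "e2 \<in> E2" using e2ab by simp
    qed
  next
    show "E2 \<subseteq> set es2"
    proof
      fix e2 assume e2: "e2 \<in> E2"
      from sg_obtain[OF t2[THEN conjunct1] this] obtain x y where xy: "e2 = {x,y}" "x \<in> V2" "y \<in> V2" by blast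
      obtain u v where uv: "u \<in> V1" "v \<in> V1" "x = f u" "y = f v"
        using bf xy unfolding bij_betw_def by blast
      then have "{f u, f v} \<in> E2" using e2 xy by simp
      then have "{u,v} \<in> E1" using fe uv(1,2) by blast
      moreover have "e2 = f ` {u,v}" using xy uv by simp
      ultimately show "e2 \<in> set es2" unfolding es2_def using es1(1)
        by (simp add: image_eqI[where x="{u,v}"])
    qed
  qed
  have Keq: "K_elem n L2 es2 = K_elem n L1' es1"
    unfolding K_elem_def es2_def map_map
  proof -
    have "map ((\<lambda>e. ga_diff ga_one (ga_basis (edge_transp L2 e))) \<circ> (`) f) es1 =
          map (\<lambda>e. ga_diff ga_one (ga_basis (edge_transp L1' e))) es1"
    proof (rule map_cong[OF refl])
      fix e assume "e \<in> set es1"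
      then have eE: "e \<in> E1" using es1 by simp
      from sg_obtain[OF sg1 eE] obtain a b where ab: "e = {a,b}" "a \<noteq> b" "a \<in> V1" "b \<in> V1" by blast
      have "f a \<noteq> f b" using ab inj by (meson inj_on_eq_iff)
      moreover have "f ` e = {f a, f b}" using ab by simp
      moreover have "L2 (f a) = L1' a" "L2 (f b) = L1' b" using ab inj by (simp_all add: L2_def)
      ultimately show "((\<lambda>e. ga_diff ga_one (ga_basis (edge_transp L2 e))) \<circ> (`) f) e =
          ga_diff ga_one (ga_basis (edge_transp L1' e))"
        using edge_transp_eq[OF ab(1,2)] edge_transp_eq[of "f ` e" "f a" "f b"] by simp
    qed
    then show "ga_scale (of_nat (fact n)) (ga_prod n (map ((\<lambda>e. ga_diff ga_one (ga_basis (edge_transp L2 e))) \<circ> (`) f) es1)) =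
          ga_scale (of_nat (fact n)) (ga_prod n (map (\<lambda>e. ga_diff ga_one (ga_basis (edge_transp L1' e))) es1))"
      by (simp only:)
  qed
  have L1b: "bij_betw L1' V1 {1..n}" unfolding L1'_def by (rule L1)
  have "K_elem n L1' es1 \<in> S_graph V1 E1"
    unfolding S_graph_def assms(3)
    by (rule CollectI, rule exI[of _ L1'], rule exI[of _ es1]) (use L1b es1 in simp)
  moreover have "K_elem n L1' es1 \<in> S_graph V2 E2"
    unfolding S_graph_def assms(4)
    by (rule CollectI, rule exI[of _ L2], rule exI[of _ es2]) (use L2b dis2 set2 Keq in simp)
  ultimately show "S_graph V1 E1 \<inter> S_graph V2 E2 \<noteq> {}" by blast
qed

end
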